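(* Let $\mathcal{X}\subseteq\mathbb{R}^n$, $\mathcal{Z}=\mathcal{X}\times\mathcal{Y}$, $\rho$ a probability distribution on $\mathcal{Z}$, $\mathcal{W}\subseteq\mathbb{R}^p$ compact, and let $\|\cdot\|_{\mathrm{adv}}$ be a norm on $\mathbb{R}^n$ with dual norm $\|\cdot\|_{\mathrm{adv}*}$, and $d(x,x')=\|x-x'\|_{\mathrm{adv}}$. Let $\ell:\mathcal{Z}\times\mathcal{W}\to\mathbb{R}^+$ be differentiable in $x$ and satisfy $\ell((x',y),w)-\ell((x,y),w)\ge\langle\nabla_x\ell((x,y),w),x'-x\rangle$ for all $x,x',y,w$. Define $R^*_\epsilon=\inf_{w\in\mathcal{W}}\mathbb{E}_{(x,y)\sim\rho}\big[\sup_{x':\|x-x'\|_{\mathrm{adv}}\le\epsilon}\ell((x',y),w)\big]$. Then $$R^*_\epsilon\ge R^*_0+\epsilon\inf_{w\in\mathcal{W}}\mathbb{E}_{(x,y)\sim\rho}\big[\|\nabla_x\ell((x,y),w)\|_{\mathrm{adv}*}\big].$$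
   Context: $R^*_0=\inf_{w}\mathbb{E}_{z\sim\rho}\ell(z,w)$ is the optimal standard risk; the dual norm is $\|v\|_{\mathrm{adv}*}=\sup_{\|u\|_{\mathrm{adv}}\le1}\langle v,u\rangle$. *)

theory Defs
  imports "HOL-Analysis.Analysis" "HOL-Probability.Probability"
begin

definition is_norm :: "('a::real_vector \<Rightarrow> real) \<Rightarrow> bool" where
  "is_norm N \<longleftrightarrow> (\<forall>x. 0 \<le> N x) \<and> (\<forall>x. N x = 0 \<longleftrightarrow> x = 0)
     \<and> (\<forall>c x. N (c *\<^sub>R x) = \<bar>c\<bar> * N x) \<and> (\<forall>x y. N (x + y) \<le> N x + N y)"

definition dual_norm :: "('a::real_inner \<Rightarrow> real) \<Rightarrow> 'a \<Rightarrow> real" where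
  "dual_norm N v = (SUP u\<in>{u. N u \<le> 1}. v \<bullet> u)"

text \<open>Optimal adversarial risk, losses being nonnegative, expectations as nonnegative integrals.\<close>
definition adv_risk ::
  "('x::real_vector \<Rightarrow> real) \<Rightarrow> ('x \<times> 'y) measure \<Rightarrow> 'w set \<Rightarrow> ('x \<Rightarrow> 'y \<Rightarrow> 'w \<Rightarrow> real) \<Rightarrow> real \<Rightarrow> ennreal" where
  "adv_risk N \<rho> W loss \<epsilon> =
     (INF w\<in>W. \<integral>\<^sup>+ z. (SUP x'\<in>{x'. N (fst z - x') \<le> \<epsilon>}. ennreal (loss x' (snd z) w)) \<partial>\<rho>)"

end

theory Submission imports Defs begin
lemma nn_superadd: "integral\<^sup>N M f + integral\<^sup>N M g \<le> (\<integral>\<^sup>+x. f x + g x \<partial>M)"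
proof -
  let ?S = "\<lambda>f::_ \<Rightarrow> ennreal. {s. simple_function M s \<and> s \<le> f}"
  have ne: "?S f \<noteq> {}" for f
  proof -
    have "(\<lambda>_. 0) \<in> ?S f" by (auto simp: le_fun_def)
    then show ?thesis by blast
  qed
  have key: "integral\<^sup>S M s + integral\<^sup>S M t \<le> (\<integral>\<^sup>+x. f x + g x \<partial>M)" if "s \<in> ?S f" "t \<in> ?S g" for s t
  proof -
    have "integral\<^sup>S M s + integral\<^sup>S M t = integral\<^sup>S M (\<lambda>x. s x + t x)"
      using that by (subst simple_integral_add) auto
    also have "\<dots> \<le> (\<integral>\<^sup>+x. f x + g x \<partial>M)"
      unfolding nn_integral_def using that
      by (intro SUP_upper) (auto simp: le_fun_def intro: add_mono)
    finally show ?thesis .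
  qed
  have "integral\<^sup>N M f + integral\<^sup>N M g = (SUP s\<in>?S f. integral\<^sup>S M s + integral\<^sup>N M g)"
    unfolding nn_integral_def[of M f] by (rule ennreal_SUP_add_left[symmetric, OF ne])
  also have "\<dots> \<le> (\<integral>\<^sup>+x. f x + g x \<partial>M)"
  proof (rule SUP_least)
    fix s assume s: "s \<in> ?S f"
    have "integral\<^sup>S M s + integral\<^sup>N M g = (SUP t\<in>?S g. integral\<^sup>S M s + integral\<^sup>S M t)"
      unfolding nn_integral_def[of M g] by (rule ennreal_SUP_add_right[OF ne])
    also have "\<dots> \<le> (\<integral>\<^sup>+x. f x + g x \<partial>M)"
      by (rule SUP_least) (rule key[OF s])
    finally show "integral\<^sup>S M s + integral\<^sup>N M g \<le> (\<integral>\<^sup>+x. f x + g x \<partial>M)" .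
  qed
  finally show ?thesis .
qed

lemma nn_cmult_le: "c * integral\<^sup>N M f \<le> (\<integral>\<^sup>+x. c * f x \<partial>M)"
proof -
  have "c * integral\<^sup>N M f = (SUP s\<in>{s. simple_function M s \<and> s \<le> f}. c * integral\<^sup>S M s)"
    unfolding nn_integral_def by (rule SUP_mult_left_ennreal)
  also have "\<dots> \<le> (\<integral>\<^sup>+x. c * f x \<partial>M)"
  proof (rule SUP_least)
    fix s assume s: "s \<in> {s. simple_function M s \<and> s \<le> f}"
    have "c * integral\<^sup>S M s = integral\<^sup>S M (\<lambda>x. c * s x)"
      using s by simp
    also have "\<dots> \<le> (\<integral>\<^sup>+x. c * f x \<partial>M)"
      unfolding nn_integral_def using s
      by (intro SUP_upper) (auto simp: le_fun_def intro: mult_left_mono)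
    finally show "c * integral\<^sup>S M s \<le> (\<integral>\<^sup>+x. c * f x \<partial>M)" .
  qed
  finally show ?thesis .
qed

lemma pointwise:
  fixes N :: "real^'n::finite \<Rightarrow> real" and g :: "real^'n" and L :: "real^'n \<Rightarrow> real"
  assumes nrm: "is_norm N" and eps: "\<epsilon> \<ge> 0" and Lx0: "L x \<ge> 0"
    and cvx: "\<And>x'. L x' - L x \<ge> g \<bullet> (x' - x)"
  shows "ennreal (L x) + ennreal \<epsilon> * ennreal (dual_norm N g)
         \<le> (SUP x'\<in>{x'. N (x - x') \<le> \<epsilon>}. ennreal (L x'))"
    (is "_ \<le> ?M")
proof -
  have N0: "N 0 = 0" using nrm unfolding is_norm_def by blast
  have xin: "x \<in> {x'. N (x - x') \<le> \<epsilon>}" using N0 eps by simp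
  have Lx: "ennreal (L x) \<le> ?M" by (rule SUP_upper[OF xin])
  show ?thesis
  proof (cases "\<epsilon> = 0")
    case True
    then show ?thesis using Lx by simp
  next
    case False
    then have ep: "\<epsilon> > 0" using eps by simp
    show ?thesis
    proof (cases "?M = top")
      case True then show ?thesis by (simp only: top_greatest)
    next
      case False
      then obtain m where m: "?M = ennreal m" "m \<ge> 0"
        by (cases ?M) auto
      have bnd: "g \<bullet> u \<le> (m - L x) / \<epsilon>" if u: "N u \<le> 1" for u
      proof -
        define x' where "x' = x + \<epsilon> *\<^sub>R u"
        have "x - x' = (-\<epsilon>) *\<^sub>R u" unfolding x'_def by simp
        then have "N (x - x') = \<bar>-\<epsilon>\<bar> * N u" using nrm unfolding is_norm_def by metis
        then have "N (x - x') = \<epsilon> * N u" using ep by simp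
        also have "\<dots> \<le> \<epsilon>" using u ep by (simp add: mult_left_le)
        finally have "x' \<in> {x'. N (x - x') \<le> \<epsilon>}" by simp
        then have "ennreal (L x') \<le> ennreal m" using m(1) by (metis SUP_upper)
        then have Lm: "L x' \<le> m" using m(2) by (auto simp add: ennreal_le_iff2)
        have "g \<bullet> (x' - x) = \<epsilon> * (g \<bullet> u)" unfolding x'_def by (simp add: inner_scaleR_right)
        with cvx[of x'] Lm have "\<epsilon> * (g \<bullet> u) \<le> m - L x" by linarith
        then show ?thesis using ep by (simp add: field_simps)
      qed
      have ne: "{u. N u \<le> (1::real)} \<noteq> {}" using N0 by (metis (mono_tags) empty_iff mem_Collect_eq zero_le_one)
      have bdd: "bdd_above ((\<lambda>u. g \<bullet> u) ` {u. N u \<le> 1})"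
        using bnd by (intro bdd_aboveI2) auto
      have d_le: "dual_norm N g \<le> (m - L x) / \<epsilon>"
        unfolding dual_norm_def using ne bnd by (intro cSUP_least) auto
      have d_ge: "0 \<le> dual_norm N g"
      proof -
        have "g \<bullet> 0 \<le> dual_norm N g" unfolding dual_norm_def
          using bdd N0 by (intro cSUP_upper) auto
        then show ?thesis by simp
      qed
      have "L x + \<epsilon> * dual_norm N g \<le> m" using d_le ep by (simp add: field_simps)
      moreover have "ennreal (L x) + ennreal \<epsilon> * ennreal (dual_norm N g) = ennreal (L x + \<epsilon> * dual_norm N g)"
        using eps d_ge Lx0 by (simp add: ennreal_plus ennreal_mult)
      ultimately show ?thesis using m(1) by (simp add: ennreal_leI)
    qed
  qed
qed


theorem corollary3:
  fixes \<rho> :: "((real^('n::finite)) \<times> 'y) measure"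
    and W :: "(real^('p::finite)) set"
    and N :: "real^'n \<Rightarrow> real"
    and loss :: "real^'n \<Rightarrow> 'y \<Rightarrow> real^'p \<Rightarrow> real"
    and G :: "real^'n \<Rightarrow> 'y \<Rightarrow> real^'p \<Rightarrow> real^'n"
    and \<epsilon> :: real
  assumes "prob_space \<rho>"
    and "compact W"
    and "is_norm N"
    and "\<epsilon> \<ge> 0"
    and nonneg: "\<And>x y w. w \<in> W \<Longrightarrow> loss x y w \<ge> 0"
    and grad: "\<And>x y w. w \<in> W \<Longrightarrow> ((\<lambda>x'. loss x' y w) has_derivative (\<lambda>h. G x y w \<bullet> h)) (at x)"
    and cvx: "\<And>x x' y w. w \<in> W \<Longrightarrow> loss x' y w - loss x y w \<ge> G x y w \<bullet> (x' - x)"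
  shows "adv_risk N \<rho> W loss \<epsilon> \<ge> adv_risk N \<rho> W loss 0
           + ennreal \<epsilon> * (INF w\<in>W. \<integral>\<^sup>+ z. ennreal (dual_norm N (G (fst z) (snd z) w)) \<partial>\<rho>)"
proof -
  let ?L = "\<lambda>w. \<integral>\<^sup>+ z. ennreal (loss (fst z) (snd z) w) \<partial>\<rho>"
  let ?D = "\<lambda>w. \<integral>\<^sup>+ z. ennreal (dual_norm N (G (fst z) (snd z) w)) \<partial>\<rho>"
  have N0: "N v = 0 \<longleftrightarrow> v = 0" "N v \<ge> 0" for v using assms(3) unfolding is_norm_def by blast+
  have set0: "{x'. N (x - x') \<le> 0} = {x}" for x :: "real^'n"
  proof (intro set_eqI iffI)
    fix x' assume "x' \<in> {x'. N (x - x') \<le> 0}"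
    then have "N (x - x') = 0" using N0(2)[of "x - x'"] by simp
    then show "x' \<in> {x}" using N0(1) by simp
  next
    fix x' assume "x' \<in> {x}"
    then show "x' \<in> {x'. N (x - x') \<le> 0}" using N0(1)[of 0] by simp
  qed
  have r0: "adv_risk N \<rho> W loss 0 = (INF w\<in>W. ?L w)"
    unfolding adv_risk_def set0 by simp
  have perw: "?L w + ennreal \<epsilon> * ?D w \<le>
      (\<integral>\<^sup>+ z. (SUP x'\<in>{x'. N (fst z - x') \<le> \<epsilon>}. ennreal (loss x' (snd z) w)) \<partial>\<rho>)"
    if w: "w \<in> W" for w
  proof -
    have "?L w + ennreal \<epsilon> * ?D w \<le> ?L w + (\<integral>\<^sup>+ z. ennreal \<epsilon> * ennreal (dual_norm N (G (fst z) (snd z) w)) \<partial>\<rho>)"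
      by (intro add_mono order_refl nn_cmult_le)
    also have "\<dots> \<le> (\<integral>\<^sup>+ z. ennreal (loss (fst z) (snd z) w) + ennreal \<epsilon> * ennreal (dual_norm N (G (fst z) (snd z) w)) \<partial>\<rho>)"
      by (rule nn_superadd)
    also have "\<dots> \<le> (\<integral>\<^sup>+ z. (SUP x'\<in>{x'. N (fst z - x') \<le> \<epsilon>}. ennreal (loss x' (snd z) w)) \<partial>\<rho>)"
      by (intro nn_integral_mono pointwise assms(3,4) nonneg[OF w] cvx[OF w])
    finally show ?thesis .
  qed
  have "adv_risk N \<rho> W loss 0 + ennreal \<epsilon> * (INF w\<in>W. ?D w) \<le> (INF w\<in>W. ?L w + ennreal \<epsilon> * ?D w)"
    unfolding r0
    by (intro INF_greatest add_mono mult_left_mono INF_lower) auto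
  also have "\<dots> \<le> adv_risk N \<rho> W loss \<epsilon>"
    unfolding adv_risk_def by (intro INF_mono) (use perw in blast)
  finally show ?thesis .
qed

end
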